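(* Each of the graphs $K_{3,3,3}$, $K_{2,4,4}$, $K_{2,3,5}$, $K_{2,2,9}$, $K_{1,2,2,2}$, $K_{1,1,2,3}$, $K_{1,1,1,2,2}$, $K_{1*4,6}$, $K_{1*5,5}$ and $K_{1*6,4}$ is uniquely $3$-list colorable.
   Context: All graphs are finite, simple and undirected. A list assignment $L$ for a graph $G$ assigns to each vertex $v$ a set $L(v)$ of colors; an $L$-coloring is a proper vertex coloring $c$ of $G$ with $c(v)\in L(v)$ for every vertex $v$. A $k$-list assignment is a list assignment with $|L(v)|=k$ for all $v$. $G$ is uniquely $k$-list colorable (U$k$LC) if there exists a $k$-list assignment $L$ such that $G$ has exactly one $L$-coloring. $K_{n_1,\dots,n_r}$ denotes the complete $r$-partite graph with parts of sizes $n_1,\dots,n_r$. $K_{1*r,s}$ denotes the complete $(r+1)$-partite graph with $r$ parts of size $1$ and one part of size $s$. *)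

theory Defs
  imports Main "HOL-Library.FuncSet"
begin

(* A graph is given by a vertex set V and a symmetric irreflexive edge relation E. *)

definition L_coloring :: "'a set \<Rightarrow> ('a \<Rightarrow> 'a \<Rightarrow> bool) \<Rightarrow> ('a \<Rightarrow> nat set) \<Rightarrow> ('a \<Rightarrow> nat) \<Rightarrow> bool" where
  "L_coloring V E L c \<longleftrightarrow>
     (\<forall>v\<in>V. c v \<in> L v) \<and> (\<forall>u\<in>V. \<forall>v\<in>V. E u v \<longrightarrow> c u \<noteq> c v)"

(* G = (V,E) is uniquely k-list colorable: some k-list assignment admits exactly one
   L-coloring (colorings identified with their restriction to V). *)
definition uniquely_k_list_colorable :: "'a set \<Rightarrow> ('a \<Rightarrow> 'a \<Rightarrow> bool) \<Rightarrow> nat \<Rightarrow> bool" where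
  "uniquely_k_list_colorable V E k \<longleftrightarrow>
     (\<exists>L. (\<forall>v\<in>V. finite (L v) \<and> card (L v) = k) \<and>
          (\<exists>!c. c \<in> extensional V \<and> L_coloring V E L c))"

(* Complete multipartite graph K_{n_1,...,n_r}, ns = [n_1,...,n_r]:
   vertex (i,j) is the j-th vertex of part i. *)
definition cmp_verts :: "nat list \<Rightarrow> (nat \<times> nat) set" where
  "cmp_verts ns = {(i, j). i < length ns \<and> j < ns ! i}"

definition cmp_edge :: "nat \<times> nat \<Rightarrow> nat \<times> nat \<Rightarrow> bool" where
  "cmp_edge u v \<longleftrightarrow> fst u \<noteq> fst v"

definition UkLC_complete_multipartite :: "nat list \<Rightarrow> nat \<Rightarrow> bool" where
  "UkLC_complete_multipartite ns k \<longleftrightarrow> uniquely_k_list_colorable (cmp_verts ns) cmp_edge k"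

definition K_1r_s :: "nat \<Rightarrow> nat \<Rightarrow> nat list" where
  "K_1r_s r s = replicate r 1 @ [s]"

end

theory Submission
  imports Defs
begin

fun sols :: "('a \<Rightarrow> 'a \<Rightarrow> bool) \<Rightarrow> ('a \<Rightarrow> nat list) \<Rightarrow> ('a \<times> nat) list \<Rightarrow> 'a list \<Rightarrow> ('a \<times> nat) list list" where
  "sols E L acc [] = [acc]"
| "sols E L acc (v # vs) = concat (map (\<lambda>x. if list_all (\<lambda>(u,y). E u v \<longrightarrow> y \<noteq> x) acc
        then sols E L ((v,x) # acc) vs else []) (L v))"

lemma sols_acc: "r \<in> set (sols E L acc vs) \<Longrightarrow> set acc \<subseteq> set r"
proof (induction vs arbitrary: acc)
  case Nil then show ?case by simp
next
  case (Cons a vs)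
  from Cons.prems obtain x where "x \<in> set (L a)" "r \<in> set (sols E L ((a,x) # acc) vs)"
    by (auto split: if_splits)
  then show ?case using Cons.IH by fastforce
qed

lemma sols_complete:
  assumes "\<forall>v\<in>set vs. c v \<in> set (L v)"
    and "\<forall>u\<in>set vs \<union> fst ` set acc. \<forall>v\<in>set vs. E u v \<longrightarrow> c u \<noteq> c v"
    and "\<forall>(u,y)\<in>set acc. y = c u"
  shows "\<exists>r\<in>set (sols E L acc vs). \<forall>v\<in>set vs. (v, c v) \<in> set r"
  using assms
proof (induction vs arbitrary: acc)
  case Nil
  then show ?case by simp
next
  case (Cons v vs)
  have ok: "list_all (\<lambda>(u,y). E u v \<longrightarrow> y \<noteq> c v) acc"
    unfolding list_all_iff
  proof (intro ballI)
    fix p assume p: "p \<in> set acc"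
    obtain u y where uy: "p = (u,y)" by (cases p)
    have "y = c u" using Cons.prems(3) p uy by auto
    moreover have "u \<in> fst ` set acc" using p uy by force
    ultimately have "E u v \<longrightarrow> y \<noteq> c v" using Cons.prems(2) by auto
    then show "case p of (u,y) \<Rightarrow> E u v \<longrightarrow> y \<noteq> c v" using uy by simp
  qed
  have "\<exists>r\<in>set (sols E L ((v, c v) # acc) vs). \<forall>w\<in>set vs. (w, c w) \<in> set r"
    apply (rule Cons.IH)
    using Cons.prems by auto
  then obtain r where r: "r \<in> set (sols E L ((v, c v) # acc) vs)" "\<forall>w\<in>set vs. (w, c w) \<in> set r"
    by blast
  have "(v, c v) \<in> set r" using sols_acc[OF r(1)] by auto
  moreover have "r \<in> set (sols E L acc (v # vs))"
    using r(1) ok Cons.prems(1) by auto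
  ultimately show ?case using r(2) by auto
qed


lemma ukl_from_sols:
  assumes "\<forall>v\<in>set vs. distinct (Ll v) \<and> length (Ll v) = k"
    and "sols E Ll [] vs = [r]" "distinct (map fst r)" "set (map fst r) = set vs"
    and "\<forall>(v,x)\<in>set r. x \<in> set (Ll v)"
    and "\<forall>(u,x)\<in>set r. \<forall>(v,y)\<in>set r. E u v \<longrightarrow> x \<noteq> y"
  shows "uniquely_k_list_colorable (set vs) E k"
proof -
  define L where "L = (\<lambda>v. set (Ll v))"
  define c0 where "c0 = (\<lambda>v. if v \<in> set vs then the (map_of r v) else undefined)"
  have c0r: "(v, c0 v) \<in> set r" if "v \<in> set vs" for v
  proof -
    from that assms(4) obtain x where "(v,x) \<in> set r" by force
    then have "map_of r v = Some x" using assms(3) by simp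
    then show ?thesis using \<open>(v,x) \<in> set r\<close> that by (simp add: c0_def)
  qed
  have col0: "L_coloring (set vs) E L c0"
    unfolding L_coloring_def
  proof (intro conjI ballI impI)
    fix v assume "v \<in> set vs" then show "c0 v \<in> L v" using c0r assms(5) L_def by fastforce
  next
    fix u v assume "u \<in> set vs" "v \<in> set vs" "E u v"
    then show "c0 u \<noteq> c0 v" using c0r[of u] c0r[of v] assms(6) by fastforce
  qed
  have ext0: "c0 \<in> extensional (set vs)" by (simp add: c0_def extensional_def)
  have uniq: "c = c0" if "c \<in> extensional (set vs)" "L_coloring (set vs) E L c" for c
  proof
    fix v
    show "c v = c0 v"
    proof (cases "v \<in> set vs")
      case True
      have "\<exists>r'\<in>set (sols E Ll [] vs). \<forall>v\<in>set vs. (v, c v) \<in> set r'"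
        apply (rule sols_complete)
        using that(2) by (auto simp: L_coloring_def L_def)
      then have "(v, c v) \<in> set r" using True assms(2) by auto
      then show ?thesis using c0r[OF True] assms(3) eq_key_imp_eq_value by metis
    next
      case False
      then show ?thesis using that(1) ext0 by (simp add: extensional_def)
    qed
  qed
  show ?thesis
    unfolding uniquely_k_list_colorable_def
    apply (rule exI[of _ L])
    using assms(1) col0 ext0 uniq by (auto simp: L_def distinct_card)
qed

definition vlist :: "nat list \<Rightarrow> (nat \<times> nat) list" where
  "vlist ns = concat (map (\<lambda>i. map (\<lambda>j. (i,j)) [0..<ns!i]) [0..<length ns])"

lemma cmp_verts_vlist: "cmp_verts ns = set (vlist ns)"
  by (auto simp: cmp_verts_def vlist_def)

definition tbl_of :: "nat list list list \<Rightarrow> nat \<times> nat \<Rightarrow> nat list" where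
  "tbl_of t v = t ! fst v ! snd v"

lemma ukl_cmp:
  assumes "\<forall>v\<in>set (vlist ns). distinct (tbl_of t v) \<and> length (tbl_of t v) = k"
    and "sols cmp_edge (tbl_of t) [] (vlist ns) = [r]" "distinct (map fst r)" "set (map fst r) = set (vlist ns)"
    and "\<forall>(v,x)\<in>set r. x \<in> set (tbl_of t v)"
    and "\<forall>(u,x)\<in>set r. \<forall>(v,y)\<in>set r. cmp_edge u v \<longrightarrow> x \<noteq> y"
  shows "UkLC_complete_multipartite ns k"
  unfolding UkLC_complete_multipartite_def cmp_verts_vlist
  by (rule ukl_from_sols[OF assms])

definition check1 :: "nat list \<Rightarrow> nat list list list \<Rightarrow> nat \<Rightarrow> ((nat \<times> nat) \<times> nat) list \<Rightarrow> bool" where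
  "check1 ns t k r \<longleftrightarrow> list_all (\<lambda>v. distinct (tbl_of t v) \<and> length (tbl_of t v) = k) (vlist ns)
     \<and> distinct (map fst r) \<and> set (map fst r) = set (vlist ns)
     \<and> list_all (\<lambda>(v,x). x \<in> set (tbl_of t v)) r
     \<and> list_all (\<lambda>(u,x). list_all (\<lambda>(v,y). cmp_edge u v \<longrightarrow> x \<noteq> y) r) r"

definition check :: "nat list \<Rightarrow> nat list list list \<Rightarrow> nat \<Rightarrow> bool" where
  "check ns t k = (case sols cmp_edge (tbl_of t) [] (vlist ns) of [r] \<Rightarrow> check1 ns t k r | _ \<Rightarrow> False)"

lemma check_ukl: "check ns t k \<Longrightarrow> UkLC_complete_multipartite ns k"
  unfolding check_def
  by (auto split: list.splits intro!: ukl_cmp simp: check1_def list_all_iff)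

lemma g0: "UkLC_complete_multipartite ([3, 3, 3]) 3"
  apply (rule check_ukl[where t="[[[1, 3, 5], [0, 4, 5], [0, 1, 2]], [[0, 1, 5], [0, 2, 5], [1, 2, 3]], [[1, 4, 5], [0, 1, 2], [0, 3, 5]]]"])
  by code_simp

lemma g1: "UkLC_complete_multipartite ([2, 4, 4]) 3"
  apply (rule check_ukl[where t="[[[0, 2, 4], [1, 3, 5]], [[0, 4, 5], [0, 1, 2], [1, 2, 4], [0, 2, 3]], [[2, 4, 5], [0, 4, 5], [0, 3, 4], [0, 1, 2]]]"])
  by code_simp

lemma g2: "UkLC_complete_multipartite ([2, 3, 5]) 3"
  apply (rule check_ukl[where t="[[[2, 3, 4], [0, 1, 5]], [[0, 2, 5], [0, 1, 5], [1, 2, 3]], [[0, 4, 5], [2, 3, 5], [0, 1, 3], [1, 2, 4], [0, 1, 5]]]"])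
  by code_simp

lemma g3: "UkLC_complete_multipartite ([2, 2, 9]) 3"
  apply (rule check_ukl[where t="[[[1, 3, 4], [0, 2, 4]], [[1, 2, 5], [0, 3, 4]], [[2, 3, 4], [0, 2, 4], [1, 3, 4], [0, 4, 5], [0, 1, 2], [3, 4, 5], [0, 2, 5], [0, 1, 4], [1, 3, 5]]]"])
  by code_simp

lemma g4: "UkLC_complete_multipartite ([1, 2, 2, 2]) 3"
  apply (rule check_ukl[where t="[[[0, 2, 3]], [[1, 2, 3], [2, 3, 4]], [[0, 2, 3], [1, 2, 4]], [[0, 2, 3], [2, 3, 4]]]"])
  by code_simp

lemma g5: "UkLC_complete_multipartite ([1, 1, 2, 3]) 3"
  apply (rule check_ukl[where t="[[[0, 1, 3]], [[1, 2, 3]], [[1, 2, 3], [0, 1, 3]], [[0, 1, 3], [0, 1, 2], [1, 2, 3]]]"])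
  by code_simp

lemma g6: "UkLC_complete_multipartite ([1, 1, 1, 2, 2]) 3"
  apply (rule check_ukl[where t="[[[0, 2, 4]], [[2, 3, 4]], [[0, 1, 2]], [[0, 1, 4], [2, 3, 4]], [[0, 2, 4], [1, 2, 4]]]"])
  by code_simp

lemma g7: "UkLC_complete_multipartite (K_1r_s 4 6) 3"
  unfolding K_1r_s_def apply (rule check_ukl[where t="[[[1, 3, 4]], [[2, 4, 5]], [[0, 4, 5]], [[0, 3, 4]], [[0, 3, 5], [2, 4, 5], [1, 4, 5], [0, 2, 4], [1, 2, 3], [0, 1, 3]]]"])
  by code_simp

lemma g8: "UkLC_complete_multipartite (K_1r_s 5 5) 3"
  unfolding K_1r_s_def apply (rule check_ukl[where t="[[[0, 1, 5]], [[2, 3, 6]], [[3, 4, 6]], [[0, 1, 4]], [[0, 1, 6]], [[0, 4, 5], [1, 2, 3], [3, 5, 6], [4, 5, 6], [0, 1, 6]]]"])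
  by code_simp

lemma g9: "UkLC_complete_multipartite (K_1r_s 6 4) 3"
  unfolding K_1r_s_def apply (rule check_ukl[where t="[[[5, 6, 7]], [[1, 4, 5]], [[0, 2, 6]], [[0, 4, 5]], [[0, 2, 4]], [[3, 4, 5]], [[1, 2, 6], [4, 5, 7], [0, 1, 3], [0, 3, 5]]]"])
  by code_simp

theorem proposition3p3:
  shows "\<forall>ns \<in> {[3,3,3], [2,4,4], [2,3,5], [2,2,9], [1,2,2,2], [1,1,2,3], [1,1,1,2,2],
                 K_1r_s 4 6, K_1r_s 5 5, K_1r_s 6 4}.
           UkLC_complete_multipartite ns 3"
  using g0 g1 g2 g3 g4 g5 g6 g7 g8 g9 by simp

end
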